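(* Let $F$ be a field of characteristic different from $2$ and $3$, let $a\in F$ with $a\neq 0$, and let $E:\ y^2=x^3+ax$ (an elliptic curve with $j$-invariant $1728$). Let $f(t)=t^4+ct+d$ with $c,d\in F$, $c\neq 0$, $d\neq 0$. Consider the surface over $F$ which is the total space of the quadratic-twist pencil $E^{f(t)}$, with affine equation $f(t)y^2=x^3+ax$. Then this surface contains a curve $C$ given (inside the surface) by the additional equation $(ct+d)y^2=ax$, and $C$ has an irreducible component $C_1$ given by $y=0$ and another irreducible component $C_2$ which is a rational curve.
   Context: The pencil $E^{f(t)}$ is the family over the $t$-line whose fibre over $t$ is the quadratic twist $f(t)y^2=x^3+ax$. A rational curve is an integral curve whose desingularisation has genus $0$ and which has a smooth $F$-rational point. *)

theory Defs
  imports "HOL-Computational_Algebra.Polynomial" "HOL-Computational_Algebra.Fraction_Field"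
begin

definition is_ideal :: "'b::comm_ring_1 set \<Rightarrow> bool" where
  "is_ideal I \<longleftrightarrow> 0 \<in> I \<and> (\<forall>a\<in>I. \<forall>b\<in>I. a + b \<in> I) \<and> (\<forall>r. \<forall>a\<in>I. r * a \<in> I)"

definition ideal_gen :: "'b::comm_ring_1 set \<Rightarrow> 'b set" where
  "ideal_gen S = \<Inter>{I. is_ideal I \<and> S \<subseteq> I}"

definition prime_ideal :: "'b::comm_ring_1 set \<Rightarrow> bool" where
  "prime_ideal P \<longleftrightarrow> is_ideal P \<and> 1 \<notin> P \<and> (\<forall>a b. a * b \<in> P \<longrightarrow> a \<in> P \<or> b \<in> P)"

(* P is a minimal prime over I, i.e. V(P) is an irreducible component of V(I) = Spec(R/I) *)
definition minimal_prime_over :: "'b::comm_ring_1 set \<Rightarrow> 'b set \<Rightarrow> bool" where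
  "minimal_prime_over I P \<longleftrightarrow> prime_ideal P \<and> I \<subseteq> P \<and>
     (\<forall>Q. prime_ideal Q \<and> I \<subseteq> Q \<and> Q \<subseteq> P \<longrightarrow> Q = P)"

definition radical :: "'b::comm_ring_1 set \<Rightarrow> 'b set" where
  "radical I = {a. \<exists>n. a ^ n \<in> I}"

(* The polynomial ring F[t,x,y] is  'a poly poly poly : outermost variable y,
   middle variable x, innermost variable t. *)
definition cnst :: "'a::field \<Rightarrow> 'a poly poly poly" where
  "cnst c = [:[:[:c:]:]:]"

definition var_t :: "'a::field poly poly poly" where
  "var_t = [:[:[:0, 1:]:]:]"

definition var_x :: "'a::field poly poly poly" where
  "var_x = [:[:0, 1:]:]"

definition var_y :: "'a::field poly poly poly" where
  "var_y = [:0, 1:]"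

(* The F-algebra homomorphism F[t,x,y] -> F(s) sending t,x,y to T,X,Y.
   F(s) is the rational function field  'a poly fract. *)
definition ev3 :: "'a::field poly fract \<Rightarrow> 'a poly fract \<Rightarrow> 'a poly fract
                   \<Rightarrow> 'a poly poly poly \<Rightarrow> 'a poly fract" where
  "ev3 T X Y p =
     poly (map_poly (\<lambda>q. poly (map_poly (\<lambda>r. poly (map_poly (\<lambda>c. Fract [:c:] 1) r) T) q) X) p) Y"

(* The integral closed subscheme V(P) of affine 3-space over F is a rational curve:
   its function field (fraction field of F[t,x,y]/P) is F-isomorphic to F(s),
   i.e. there is an F-algebra map F[t,x,y] -> F(s) with kernel P whose image
   generates F(s) as a field. *)
definition rational_curve_ideal :: "'a::field poly poly poly set \<Rightarrow> bool" where
  "rational_curve_ideal P \<longleftrightarrow>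
     (\<exists>T X Y. {p. ev3 T X Y p = 0} = P \<and>
        (\<forall>z. \<exists>p q. ev3 T X Y q \<noteq> 0 \<and> z = ev3 T X Y p / ev3 T X Y q))"

end

theory Submission
  imports Defs
begin


definition rhom :: "('a::comm_ring_1 \<Rightarrow> 'b::comm_ring_1) \<Rightarrow> bool" where
  "rhom f \<longleftrightarrow> f 0 = 0 \<and> f 1 = 1 \<and> (\<forall>x y. f (x + y) = f x + f y) \<and> (\<forall>x y. f (x * y) = f x * f y)"

lemma rhomD:
  assumes "rhom f"
  shows "f 0 = 0" "f 1 = 1" "f (x + y) = f x + f y" "f (x * y) = f x * f y"
    "f (- x) = - f x" "f (x - y) = f x - f y" "f (x ^ n) = f x ^ n"
proof -
  show a: "f 0 = 0" "f 1 = 1" "f (x + y) = f x + f y" "f (x * y) = f x * f y"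
    using assms by (auto simp: rhom_def)
  have m: "f (- z) = - f z" for z
  proof -
    have "f (- z) + f z = 0" using assms unfolding rhom_def by (metis add.commute add.right_inverse)
    thus ?thesis by (simp add: eq_neg_iff_add_eq_0)
  qed
  show "f (- x) = - f x" by (rule m)
  show "f (x - y) = f x - f y" using assms m unfolding rhom_def by (metis diff_conv_add_uminus)
  show "f (x ^ n) = f x ^ n" using assms by (induct n) (auto simp: rhom_def)
qed

lemma rhom_comp: "rhom f \<Longrightarrow> rhom g \<Longrightarrow> rhom (g \<circ> f)"
  by (simp add: rhom_def)

lemma rhom_id: "rhom (\<lambda>x. x)" by (simp add: rhom_def)

definition E1 :: "('a::comm_ring_1 \<Rightarrow> 'b::comm_ring_1) \<Rightarrow> 'b \<Rightarrow> 'a poly \<Rightarrow> 'b" where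
  "E1 f x p = poly (map_poly f p) x"

lemma E1_0 [simp]: "E1 f x 0 = 0" by (simp add: E1_def)

lemma E1_pCons: "f 0 = 0 \<Longrightarrow> E1 f x (pCons a p) = f a + x * E1 f x p"
  by (simp add: E1_def map_poly_pCons)

lemma E1_add:
  assumes "f 0 = 0" "\<And>u v. f (u + v) = f u + f v"
  shows "E1 f x (p + q) = E1 f x p + E1 f x q"
  by (induct p q rule: poly_induct2) (simp_all add: E1_pCons assms algebra_simps)

lemma E1_smult:
  assumes "f 0 = 0" "\<And>u v. f (u * v) = f u * f v"
  shows "E1 f x (smult a q) = f a * E1 f x q"
  by (induct q) (simp_all add: E1_pCons assms algebra_simps)

lemma rhom_E1: assumes "rhom f" shows "rhom (E1 f x)"
proof -
  have f0: "f 0 = 0" and f1: "f 1 = 1" and fa: "\<And>u v. f (u + v) = f u + f v"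
    and fm: "\<And>u v. f (u * v) = f u * f v" using rhomD[OF assms] by auto
  have add: "E1 f x (p + q) = E1 f x p + E1 f x q" for p q by (rule E1_add[OF f0 fa])
  have mult: "E1 f x (p * q) = E1 f x p * E1 f x q" for p q
  proof (induct p)
    case 0 thus ?case by simp
  next
    case (pCons a p)
    have "pCons a p * q = smult a q + pCons 0 (p * q)" by simp
    hence "E1 f x (pCons a p * q) = f a * E1 f x q + x * E1 f x (p * q)"
      by (simp only: add E1_smult[where f=f, OF f0 fm] E1_pCons[where f=f, OF f0] f0) simp
    thus ?case using pCons by (simp add: E1_pCons[where f=f, OF f0] algebra_simps)
  qed
  have one: "E1 f x 1 = 1" by (simp add: E1_def f1 f0)
  show ?thesis unfolding rhom_def using add mult one by simp
qed

lemma E1_comp: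
  assumes "rhom g" "f 0 = 0"
  shows "g (E1 f x p) = E1 (g \<circ> f) (g x) p"
  using rhomD[OF assms(1)] assms(2) by (induct p) (simp_all add: E1_pCons)

lemma E1_const: "f 0 = 0 \<Longrightarrow> E1 f x [:c:] = f c"
  by (simp add: E1_pCons)

lemma E1_X: "rhom f \<Longrightarrow> E1 f x [:0, 1:] = x"
  by (simp add: E1_pCons rhomD)





lemma ideal_gen_ideal: "is_ideal (ideal_gen S)"
  unfolding ideal_gen_def is_ideal_def by auto

lemma ideal_gen_sub: "S \<subseteq> ideal_gen S"
  unfolding ideal_gen_def by auto

lemma ideal_gen_least: "is_ideal I \<Longrightarrow> S \<subseteq> I \<Longrightarrow> ideal_gen S \<subseteq> I"
  unfolding ideal_gen_def by auto

lemma ideal_add: "is_ideal I \<Longrightarrow> a \<in> I \<Longrightarrow> b \<in> I \<Longrightarrow> a + b \<in> I"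
  unfolding is_ideal_def by auto
lemma ideal_mult: "is_ideal I \<Longrightarrow> a \<in> I \<Longrightarrow> r * a \<in> I"
  unfolding is_ideal_def by auto
lemma ideal_mult2: "is_ideal I \<Longrightarrow> a \<in> I \<Longrightarrow> a * r \<in> I"
  unfolding is_ideal_def by (metis mult.commute)
lemma ideal_zero: "is_ideal I \<Longrightarrow> 0 \<in> I"
  unfolding is_ideal_def by auto
lemma ideal_neg: "is_ideal I \<Longrightarrow> a \<in> I \<Longrightarrow> - a \<in> I"
  using ideal_mult[of I a "-1"] by simp
lemma ideal_diff: "is_ideal I \<Longrightarrow> a \<in> I \<Longrightarrow> b \<in> I \<Longrightarrow> a - b \<in> I"
  using ideal_add ideal_neg by (metis diff_conv_add_uminus)

lemma ker_ideal: "rhom f \<Longrightarrow> is_ideal {p. f p = 0}"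
  unfolding is_ideal_def using rhomD by (auto simp: rhomD)

lemma ker_prime:
  fixes f :: "'a::comm_ring_1 \<Rightarrow> 'b::idom"
  shows "rhom f \<Longrightarrow> prime_ideal {p. f p = 0}"
  unfolding prime_ideal_def using ker_ideal by (auto simp: rhomD)

lemma rhom_cnst: "rhom cnst"
  unfolding rhom_def cnst_def by (simp add: one_pCons)

lemma cnst_simps: "cnst 0 = 0" "cnst 1 = 1" "cnst (a + b) = cnst a + cnst b"
  "cnst (a * b) = cnst a * cnst b" "cnst (- a) = - cnst a" "cnst (a - b) = cnst a - cnst b"
  "cnst (a ^ n) = cnst a ^ n"
  using rhomD[OF rhom_cnst] by auto

lemma poly3_induct [case_names cnst t x y add mult]:
  assumes c: "\<And>c. P (cnst c)" and t: "P var_t" and x: "P var_x" and y: "P var_y"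
    and add: "\<And>p q. P p \<Longrightarrow> P q \<Longrightarrow> P (p + q)" and mult: "\<And>p q. P p \<Longrightarrow> P q \<Longrightarrow> P (p * q)"
  shows "P p"
proof -
  have z: "P 0" using c[of 0] by (simp add: cnst_def)
  have 1: "P [:[:u:]:]" for u
  proof (induct u)
    case 0 thus ?case using z by simp
  next
    case (pCons a u)
    have "[:[:pCons a u:]:] = cnst a + var_t * [:[:u:]:]"
      by (simp add: cnst_def var_t_def)
    thus ?case using pCons by (metis add mult c t)
  qed
  have 2: "P [:w:]" for w
  proof (induct w)
    case 0 thus ?case using z by simp
  next
    case (pCons a w)
    have "[:pCons a w:] = [:[:a:]:] + var_x * [:w:]"
      by (simp add: var_x_def)
    thus ?case using pCons by (metis add mult 1 x)
  qed
  show ?thesis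
  proof (induct p)
    case 0 thus ?case using z by simp
  next
    case (pCons a p)
    have "pCons a p = [:a:] + var_y * p"
      by (simp add: var_y_def)
    thus ?case using pCons by (metis add mult 2 y)
  qed
qed

definition E3 :: "('a::field \<Rightarrow> 'b::comm_ring_1) \<Rightarrow> 'b \<Rightarrow> 'b \<Rightarrow> 'b \<Rightarrow> 'a poly poly poly \<Rightarrow> 'b" where
  "E3 f T X Y = E1 (E1 (E1 f T) X) Y"

lemma rhom_E3: "rhom f \<Longrightarrow> rhom (E3 f T X Y)"
  unfolding E3_def by (intro rhom_E1)

lemma E3_gen:
  assumes "rhom f"
  shows "E3 f T X Y (cnst c) = f c" "E3 f T X Y var_t = T" "E3 f T X Y var_x = X" "E3 f T X Y var_y = Y"
  using rhomD[OF assms] rhomD[OF rhom_E1[OF assms]] rhomD[OF rhom_E1[OF rhom_E1[OF assms]]]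
  by (simp_all add: E3_def cnst_def var_t_def var_x_def var_y_def E1_pCons)

lemma ev3_E3: "ev3 T X Y = E3 (\<lambda>c. Fract [:c:] 1) T X Y"
  unfolding ev3_def E3_def E1_def by (rule ext) simp

lemma hom_diff:
  assumes "rhom \<phi>" "rhom \<psi>" "is_ideal Q"
    and "\<And>c. \<phi> (cnst c) - \<psi> (cnst c) \<in> Q" "\<phi> var_t - \<psi> var_t \<in> Q"
        "\<phi> var_x - \<psi> var_x \<in> Q" "\<phi> var_y - \<psi> var_y \<in> Q"
  shows "\<phi> p - \<psi> p \<in> Q"
proof (induct p rule: poly3_induct)
  case (add p q)
  have "\<phi> (p + q) - \<psi> (p + q) = (\<phi> p - \<psi> p) + (\<phi> q - \<psi> q)"
    by (simp add: rhomD[OF assms(1)] rhomD[OF assms(2)])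
  thus ?case using add ideal_add[OF assms(3)] by simp
next
  case (mult p q)
  have "\<phi> (p * q) - \<psi> (p * q) = \<phi> p * (\<phi> q - \<psi> q) + (\<phi> p - \<psi> p) * \<psi> q"
    by (simp add: rhomD[OF assms(1)] rhomD[OF assms(2)] algebra_simps)
  thus ?case using mult ideal_add[OF assms(3)] ideal_mult[OF assms(3)] ideal_mult2[OF assms(3)] by simp
qed (use assms in auto)

lemma hom_eq:
  assumes "rhom \<phi>" "rhom \<psi>"
    and "\<And>c. \<phi> (cnst c) = \<psi> (cnst c)" "\<phi> var_t = \<psi> var_t"
        "\<phi> var_x = \<psi> var_x" "\<phi> var_y = \<psi> var_y"
  shows "\<phi> p = \<psi> p"
  by (induct p rule: poly3_induct) (use assms in \<open>simp_all add: rhomD\<close>)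





definition Fr :: "'a::field poly \<Rightarrow> 'a poly fract" where "Fr p = Fract p 1"
definition cf :: "'a::field \<Rightarrow> 'a poly fract" where "cf k = Fr [:k:]"
definition V :: "'a::field poly fract" where "V = Fr [:0, 1:]"

lemma rhom_Fr: "rhom Fr"
  unfolding rhom_def Fr_def by (simp add: Zero_fract_def One_fract_def)

lemma rhom_cf: "rhom cf"
  unfolding rhom_def cf_def Fr_def by (simp add: Zero_fract_def One_fract_def one_pCons mult.commute)

lemma Fr_eq_0: "Fr p = 0 \<longleftrightarrow> p = 0"
  unfolding Fr_def by (simp add: Zero_fract_def eq_fract)

lemma V_nz: "V \<noteq> 0" unfolding V_def Fr_eq_0 by simp

lemma ev3_cf: "ev3 T X Y = E3 cf T X Y"
  unfolding ev3_E3 cf_def Fr_def ..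

locale L =
  fixes a c d :: "'a::field"
  assumes a: "a \<noteq> 0" and c: "c \<noteq> 0" and d: "d \<noteq> 0"
begin

definition Tp :: "'a poly" where "Tp = smult (a / c) (monom 1 4) - [:d / c:]"
definition Tf :: "'a poly fract" where "Tf = Fr Tp"
definition Xf :: "'a poly fract" where "Xf = Tf ^ 2 / V ^ 2"
definition Yf :: "'a poly fract" where "Yf = Tf / V ^ 3"
definition ev :: "'a poly poly poly \<Rightarrow> 'a poly fract" where "ev = E3 cf Tf Xf Yf"

definition Sp :: "'a poly poly poly" where
  "Sp = (var_t ^ 4 + cnst c * var_t + cnst d) * var_y ^ 2 - (var_x ^ 3 + cnst a * var_x)"
definition Gp :: "'a poly poly poly" where
  "Gp = (cnst c * var_t + cnst d) * var_y ^ 2 - cnst a * var_x"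
definition hp :: "'a poly poly poly" where
  "hp = cnst a ^ 3 * var_t ^ 4 - (cnst c * var_t + cnst d) ^ 3 * var_y ^ 4"

lemma hp_ident:
  "var_y * var_y * hp = cnst a ^ 3 * (Sp - Gp)
     - Gp * (3 * ((cnst c * var_t + cnst d) * var_y ^ 2) ^ 2
             - 3 * ((cnst c * var_t + cnst d) * var_y ^ 2) * Gp + Gp ^ 2)"
  unfolding Sp_def Gp_def hp_def by algebra

lemma coeff_Tp: "coeff Tp n = (if n = 4 then a / c else if n = 0 then - (d / c) else 0)"
  unfolding Tp_def by (auto simp: coeff_monom coeff_pCons split: nat.splits)

lemma degree_Tp: "degree Tp = 4"
proof (rule antisym)
  show "degree Tp \<le> 4" by (rule degree_le) (simp add: coeff_Tp)
  show "4 \<le> degree Tp" using a c by (intro le_degree) (simp add: coeff_Tp)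
qed

lemma Tp_nz: "Tp \<noteq> 0" using degree_Tp by auto
lemma Tf_nz: "Tf \<noteq> 0" unfolding Tf_def Fr_eq_0 by (rule Tp_nz)

lemma key_T: "cf c * Tf + cf d = cf a * V ^ 4"
proof -
  have "[:c:] * Tp + [:d:] = [:a:] * [:0, 1:] ^ 4"
    using c by (simp add: Tp_def monom_altdef algebra_simps smult_diff_right)
  hence "Fr ([:c:] * Tp + [:d:]) = Fr ([:a:] * [:0, 1:] ^ 4)" by simp
  thus ?thesis unfolding Tf_def cf_def V_def by (simp only: rhomD[OF rhom_Fr])
qed

lemma rhom_ev: "rhom ev" unfolding ev_def by (intro rhom_E3 rhom_cf)

lemma ev_gen: "ev (cnst k) = cf k" "ev var_t = Tf" "ev var_x = Xf" "ev var_y = Yf"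
  unfolding ev_def using E3_gen[OF rhom_cf] by auto

lemmas ev_simps = ev_gen rhomD[OF rhom_ev] rhomD[OF rhom_cf]

lemma ev_Gp: "ev Gp = 0"
proof -
  have "ev Gp = (cf c * Tf + cf d) * Yf ^ 2 - cf a * Xf" unfolding Gp_def by (simp add: ev_simps)
  also have "\<dots> = 0" unfolding key_T Xf_def Yf_def using V_nz by (simp add: field_simps eval_nat_numeral)
  finally show ?thesis .
qed

lemma ev_Sp: "ev Sp = 0"
proof -
  have "ev Sp = (Tf ^ 4 + (cf c * Tf + cf d)) * Yf ^ 2 - (Xf ^ 3 + cf a * Xf)"
    unfolding Sp_def by (simp add: ev_simps add.assoc)
  also have "\<dots> = 0" unfolding key_T Xf_def Yf_def using V_nz
    by (simp add: divide_simps eval_nat_numeral) (simp add: algebra_simps)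
  finally show ?thesis .
qed

lemma Yf_nz: "Yf \<noteq> 0" unfolding Yf_def using Tf_nz V_nz by simp
lemma Xf_nz: "Xf \<noteq> 0" unfolding Xf_def using Tf_nz V_nz by simp


end

definition cp :: "'a::field \<Rightarrow> 'a poly" where "cp k = [:k:]"
lemma rhom_cp: "rhom cp" unfolding rhom_def cp_def by (simp add: one_pCons)

definition pii :: "'a::field poly poly poly \<Rightarrow> 'a poly" where "pii = E3 cp [:0, 1:] 0 0"
lemma rhom_pii: "rhom pii" unfolding pii_def by (intro rhom_E3 rhom_cp)
lemma pii_gen: "pii (cnst k) = [:k:]" "pii var_t = [:0, 1:]" "pii var_x = 0" "pii var_y = 0"
  unfolding pii_def using E3_gen[OF rhom_cp] by (auto simp: cp_def)
lemmas pii_simps = pii_gen rhomD[OF rhom_pii]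

definition up0 :: "'a::field poly \<Rightarrow> 'a poly poly poly" where "up0 u = [:[:u:]:]"
lemma rhom_up0: "rhom up0" unfolding rhom_def up0_def by (simp add: one_pCons mult.commute)

lemma P1_sub:
  assumes J: "is_ideal J" and x: "var_x \<in> J" and y: "var_y \<in> J" and p: "pii p = 0"
  shows "p \<in> J"
proof -
  have "(\<lambda>p. p) p - (up0 \<circ> pii) p \<in> J"
  proof (rule hom_diff[OF rhom_id rhom_comp[OF rhom_pii rhom_up0] J])
    show "cnst k - (up0 \<circ> pii) (cnst k) \<in> J" for k
      using ideal_zero[OF J] by (simp only: comp_apply pii_gen) (simp add: up0_def cnst_def)
    show "var_t - (up0 \<circ> pii) var_t \<in> J"
      using ideal_zero[OF J] by (simp only: comp_apply pii_gen) (simp add: up0_def var_t_def)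
    show "var_x - (up0 \<circ> pii) var_x \<in> J"
      using x by (simp add: pii_gen up0_def)
    show "var_y - (up0 \<circ> pii) var_y \<in> J"
      using y by (simp add: pii_gen up0_def)
  qed
  thus ?thesis using p by (simp add: up0_def)
qed

context L begin

definition Ip :: "'a poly poly poly set" where "Ip = ideal_gen {Sp, Gp}"
definition P1 :: "'a poly poly poly set" where "P1 = {p. pii p = 0}"
definition P2 :: "'a poly poly poly set" where "P2 = {p. ev p = 0}"

lemma Ip_ideal: "is_ideal Ip" unfolding Ip_def by (rule ideal_gen_ideal)
lemma SG_Ip: "Sp \<in> Ip" "Gp \<in> Ip" unfolding Ip_def using ideal_gen_sub[of "{Sp, Gp}"] by auto

lemma y2h_Ip: "var_y * var_y * hp \<in> Ip"
  unfolding hp_ident using Ip_ideal SG_Ip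
  by (intro ideal_diff ideal_mult ideal_mult2) auto

lemma x_ident: "var_x = cnst (1 / a) * ((cnst c * var_t + cnst d) * var_y * var_y - Gp)"
proof -
  have 1: "cnst (1 / a) * cnst a = 1" using a by (simp add: cnst_simps(4)[symmetric] cnst_simps(2))
  have "cnst (1 / a) * ((cnst c * var_t + cnst d) * var_y * var_y - Gp) = (cnst (1 / a) * cnst a) * var_x"
    unfolding Gp_def by (simp add: algebra_simps power2_eq_square)
  thus ?thesis using 1 by simp
qed

lemma pii_hp: "pii hp \<noteq> 0"
proof -
  have "pii hp = [:a:] ^ 3 * [:0, 1:] ^ 4" unfolding hp_def by (simp add: pii_simps)
  thus ?thesis using a by simp
qed

lemma P1_prime: "prime_ideal P1" unfolding P1_def by (rule ker_prime[OF rhom_pii])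
lemma P2_prime: "prime_ideal P2" unfolding P2_def by (rule ker_prime[OF rhom_ev])
lemma P1_ideal: "is_ideal P1" using P1_prime prime_ideal_def by blast
lemma P2_ideal: "is_ideal P2" using P2_prime prime_ideal_def by blast

lemma prime_mult: "prime_ideal Q \<Longrightarrow> u * v \<in> Q \<Longrightarrow> u \<in> Q \<or> v \<in> Q"
  unfolding prime_ideal_def by blast

lemma Ip_P1: "Ip \<subseteq> P1"
  unfolding Ip_def by (rule ideal_gen_least[OF P1_ideal]) (auto simp: P1_def Sp_def Gp_def pii_simps)

lemma Ip_P2: "Ip \<subseteq> P2"
  unfolding Ip_def by (rule ideal_gen_least[OF P2_ideal]) (auto simp: P2_def ev_Sp ev_Gp)

lemma P1_min: "prime_ideal Q \<Longrightarrow> Ip \<subseteq> Q \<Longrightarrow> Q \<subseteq> P1 \<Longrightarrow> Q = P1"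
proof -
  assume Q: "prime_ideal Q" and IQ: "Ip \<subseteq> Q" and QP: "Q \<subseteq> P1"
  have QI: "is_ideal Q" using Q prime_ideal_def by blast
  have "hp \<notin> Q" using QP pii_hp P1_def by auto
  hence "var_y * var_y \<in> Q" using prime_mult[OF Q] y2h_Ip IQ by blast
  hence y: "var_y \<in> Q" using prime_mult[OF Q] by blast
  have x: "var_x \<in> Q" unfolding x_ident using y IQ SG_Ip QI
    by (intro ideal_mult ideal_diff ideal_mult2) auto
  have "P1 \<subseteq> Q" using P1_sub[OF QI x y] P1_def by auto
  thus ?thesis using QP by auto
qed

lemma P1_rad: "radical (ideal_gen {Sp, Gp, var_y}) = P1"
proof
  have J: "ideal_gen {Sp, Gp, var_y} \<subseteq> P1"
    by (rule ideal_gen_least[OF P1_ideal]) (auto simp: P1_def Sp_def Gp_def pii_simps)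
  show "radical (ideal_gen {Sp, Gp, var_y}) \<subseteq> P1"
  proof
    fix p assume "p \<in> radical (ideal_gen {Sp, Gp, var_y})"
    then obtain n where "p ^ n \<in> P1" using J unfolding radical_def by auto
    hence "pii p ^ n = 0" by (simp add: P1_def pii_simps)
    thus "p \<in> P1" by (simp add: P1_def)
  qed
next
  let ?J = "ideal_gen {Sp, Gp, var_y}"
  have JI: "is_ideal ?J" by (rule ideal_gen_ideal)
  have sub: "{Sp, Gp, var_y} \<subseteq> ?J" by (rule ideal_gen_sub)
  have x: "var_x \<in> ?J" unfolding x_ident using sub JI
    by (intro ideal_mult ideal_diff ideal_mult2) auto
  have "P1 \<subseteq> ?J" using P1_sub[OF JI x] sub P1_def by auto
  thus "P1 \<subseteq> radical ?J" unfolding radical_def by (auto intro!: exI[of _ "1::nat"])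
qed

lemma P1_ne_P2: "P1 \<noteq> P2"
proof -
  have "var_x \<in> P1" by (simp add: P1_def pii_simps)
  moreover have "var_x \<notin> P2" by (simp add: P2_def ev_gen Xf_nz)
  ultimately show ?thesis by auto
qed

lemma rational: "rational_curve_ideal P2"
proof -
  have eqn: "{p. ev3 Tf Xf Yf p = 0} = P2" unfolding P2_def ev3_cf ev_def ..
  define Rg where "Rg = {z. \<exists>p q. ev q \<noteq> 0 \<and> z = ev p / ev q}"
  have ev_in: "ev p \<in> Rg" for p unfolding Rg_def
    by (rule CollectI, rule exI[of _ p], rule exI[of _ 1]) (simp add: ev_simps)
  have add: "z1 + z2 \<in> Rg" if h1: "z1 \<in> Rg" and h2: "z2 \<in> Rg" for z1 z2
  proof -
    obtain p1 q1 p2 q2 where n1: "ev q1 \<noteq> 0" and e1: "z1 = ev p1 / ev q1"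
      and n2: "ev q2 \<noteq> 0" and e2: "z2 = ev p2 / ev q2"
      using h1 h2 unfolding Rg_def by blast
    show ?thesis unfolding Rg_def mem_Collect_eq e1 e2
      by (rule exI[of _ "p1 * q2 + p2 * q1"], rule exI[of _ "q1 * q2"]) (simp add: n1 n2 ev_simps field_simps)
  qed
  have mul: "z1 * z2 \<in> Rg" if h1: "z1 \<in> Rg" and h2: "z2 \<in> Rg" for z1 z2
  proof -
    obtain p1 q1 p2 q2 where n1: "ev q1 \<noteq> 0" and e1: "z1 = ev p1 / ev q1"
      and n2: "ev q2 \<noteq> 0" and e2: "z2 = ev p2 / ev q2"
      using h1 h2 unfolding Rg_def by blast
    show ?thesis unfolding Rg_def mem_Collect_eq e1 e2
      by (rule exI[of _ "p1 * p2"], rule exI[of _ "q1 * q2"]) (simp add: n1 n2 ev_simps field_simps)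
  qed
  have dv: "z1 / z2 \<in> Rg" if h1: "z1 \<in> Rg" and h2: "z2 \<in> Rg" for z1 z2
  proof (cases "z2 = 0")
    case True thus ?thesis using ev_in[of 0] by (simp add: ev_simps)
  next
    case False
    obtain p1 q1 p2 q2 where n1: "ev q1 \<noteq> 0" and e1: "z1 = ev p1 / ev q1"
      and n2: "ev q2 \<noteq> 0" and e2: "z2 = ev p2 / ev q2"
      using h1 h2 unfolding Rg_def by blast
    have n3: "ev p2 \<noteq> 0" using False e2 by simp
    show ?thesis unfolding Rg_def mem_Collect_eq e1 e2
      by (rule exI[of _ "p1 * q2"], rule exI[of _ "q1 * p2"]) (simp add: n1 n2 n3 ev_simps field_simps)
  qed
  have V: "V \<in> Rg"
  proof -
    have "V = ev var_x / (ev var_t * ev var_y)"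
      unfolding ev_gen Xf_def Yf_def using V_nz Tf_nz by (simp add: field_simps eval_nat_numeral)
    hence "V = ev var_x / ev (var_t * var_y)" by (simp add: ev_simps)
    thus ?thesis using dv[OF ev_in ev_in] by metis
  qed
  have Fr_in: "Fr P \<in> Rg" for P
  proof (induct P)
    case 0 thus ?case using ev_in[of 0] by (simp add: ev_simps rhomD[OF rhom_Fr])
  next
    case (pCons k P)
    have "pCons k P = [:k:] + [:0, 1:] * P" by simp
    hence "Fr (pCons k P) = cf k + V * Fr P" unfolding cf_def V_def
      by (metis rhomD(3,4)[OF rhom_Fr])
    moreover have "cf k \<in> Rg" using ev_in[of "cnst k"] by (simp add: ev_gen)
    ultimately show ?case using add mul V pCons by simp
  qed
  have "\<exists>p q. ev3 Tf Xf Yf q \<noteq> 0 \<and> z = ev3 Tf Xf Yf p / ev3 Tf Xf Yf q" for z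
  proof -
  obtain P Q where z: "z = Fract P Q" "Q \<noteq> 0" by (cases z) auto
  hence "z = Fr P / Fr Q" by (simp add: Fr_def)
  hence "z \<in> Rg" using dv Fr_in by simp
  thus "\<exists>p q. ev3 Tf Xf Yf q \<noteq> 0 \<and> z = ev3 Tf Xf Yf p / ev3 Tf Xf Yf q"
    unfolding Rg_def ev3_cf ev_def by simp
  qed
  thus ?thesis unfolding rational_curve_ideal_def using eqn by blast
qed

end



definition M4 :: "'a::field poly \<Rightarrow> bool" where
  "M4 A \<longleftrightarrow> (\<forall>n. \<not> (4::nat) dvd n \<longrightarrow> coeff A n = 0)"

lemma M4D: "M4 A \<Longrightarrow> \<not> (4::nat) dvd n \<Longrightarrow> coeff A n = 0" unfolding M4_def by blast

lemma M4_add: "M4 A \<Longrightarrow> M4 B \<Longrightarrow> M4 (A + B)" unfolding M4_def by simp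
lemma M4_const: "M4 [:k:]" unfolding M4_def by (auto simp: coeff_pCons split: nat.splits)
lemma M4_mult: assumes "M4 A" "M4 B" shows "M4 (A * B)"
  unfolding M4_def
proof (intro allI impI)
  fix n :: nat assume n: "\<not> 4 dvd n"
  have "coeff A i * coeff B (n - i) = 0" if "i \<in> {..n}" for i
  proof (cases "4 dvd i")
    case True
    with n that have "\<not> 4 dvd (n - i)" by (auto simp: dvd_def) (metis add_mult_distrib2 le_add_diff_inverse)
    thus ?thesis using M4D[OF assms(2)] by simp
  next
    case False thus ?thesis using M4D[OF assms(1)] by simp
  qed
  thus "coeff (A * B) n = 0" unfolding coeff_mult by (simp add: sum.neutral)
qed
lemma M4_power: "M4 A \<Longrightarrow> M4 (A ^ n)"
  by (induct n) (simp_all add: M4_mult one_pCons M4_const)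

lemma cm0: "M4 A \<Longrightarrow> N < k \<or> \<not> 4 dvd (N - k) \<Longrightarrow> coeff (monom 1 k * A) N = 0"
  by (auto simp: coeff_monom_mult M4D)
lemma cm1: "coeff (monom 1 k * (A :: 'a::field poly)) (n + k) = coeff A n"
  by (simp add: coeff_monom_mult)

lemma sep4:
  fixes A0 A1 A2 A3 :: "'a::field poly"
  assumes m: "M4 A0" "M4 A1" "M4 A2" "M4 A3"
    and W: "monom 1 9 * A0 + monom 1 6 * A1 + monom 1 3 * A2 + monom 1 0 * A3 = 0"
  shows "A0 = 0 \<and> A1 = 0 \<and> A2 = 0 \<and> A3 = 0"
proof -
  have cW: "coeff (monom 1 9 * A0) N + coeff (monom 1 6 * A1) N + coeff (monom 1 3 * A2) N
      + coeff (monom 1 0 * A3) N = 0" for N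
    using arg_cong[OF W, of "\<lambda>p. coeff p N"] by (simp only: coeff_add coeff_0)
  have z: "coeff A n = 0" if "M4 A" "\<not> 4 dvd n" for A :: "'a poly" and n using M4D that by blast
  have "coeff A0 n = 0" for n
  proof (cases "4 dvd n")
    case True
    have "coeff (monom 1 6 * A1) (n + 9) = 0" "coeff (monom 1 3 * A2) (n + 9) = 0"
      "coeff (monom 1 0 * A3) (n + 9) = 0"
      using True by (intro cm0 m; presburger)+
    thus ?thesis using cW[of "n + 9"] by (simp only: cm1) simp
  qed (use z m in auto)
  moreover have "coeff A1 n = 0" for n
  proof (cases "4 dvd n")
    case True
    have "coeff (monom 1 9 * A0) (n + 6) = 0" "coeff (monom 1 3 * A2) (n + 6) = 0"
      "coeff (monom 1 0 * A3) (n + 6) = 0"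
      using True by (intro cm0 m; presburger)+
    thus ?thesis using cW[of "n + 6"] by (simp only: cm1) simp
  qed (use z m in auto)
  moreover have "coeff A2 n = 0" for n
  proof (cases "4 dvd n")
    case True
    have "coeff (monom 1 9 * A0) (n + 3) = 0" "coeff (monom 1 6 * A1) (n + 3) = 0"
      "coeff (monom 1 0 * A3) (n + 3) = 0"
      using True by (intro cm0 m; presburger)+
    thus ?thesis using cW[of "n + 3"] by (simp only: cm1) simp
  qed (use z m in auto)
  moreover have "coeff A3 n = 0" for n
  proof (cases "4 dvd n")
    case True
    have "coeff (monom 1 9 * A0) (n + 0) = 0" "coeff (monom 1 6 * A1) (n + 0) = 0"
      "coeff (monom 1 3 * A2) (n + 0) = 0"
      using True by (intro cm0 m; presburger)+
    thus ?thesis using cW[of "n + 0"] by (simp only: cm1) simp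
  qed (use z m in auto)
  ultimately show ?thesis by (simp add: poly_eq_iff)
qed

definition cB :: "'a::field \<Rightarrow> 'a poly poly" where "cB k = [:[:k:]:]"
lemma rhom_cB: "rhom cB" unfolding rhom_def cB_def by (simp add: one_pCons mult.commute)
definition tB :: "'a::field poly poly" where "tB = [:[:0, 1:]:]"
definition yB :: "'a::field poly poly" where "yB = [:0, 1:]"

definition gg :: "'a::field poly \<Rightarrow> 'a poly poly poly" where "gg = E1 cnst var_t"
definition iota :: "'a::field poly poly \<Rightarrow> 'a poly poly poly" where "iota = E1 gg var_y"

lemma rhom_gg: "rhom gg" unfolding gg_def by (intro rhom_E1 rhom_cnst)
lemma rhom_iota: "rhom iota" unfolding iota_def by (intro rhom_E1 rhom_gg)

lemma gg_gen: "gg [:k:] = cnst k" "gg [:0, 1:] = var_t"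
  unfolding gg_def using E1_const[of cnst] E1_X[OF rhom_cnst] rhomD[OF rhom_cnst] by auto

lemma iota_const: "iota [:u:] = gg u"
  unfolding iota_def using E1_const[of gg] rhomD[OF rhom_gg] by auto

lemma iota_gen: "iota (cB k) = cnst k" "iota tB = var_t" "iota yB = var_y"
proof -
  show "iota (cB k) = cnst k" "iota tB = var_t" unfolding cB_def tB_def iota_const gg_gen by simp_all
  show "iota yB = var_y" unfolding iota_def yB_def by (rule E1_X[OF rhom_gg])
qed

lemma poly4: "degree (r :: 'a::zero poly) < 4 \<Longrightarrow> r = [:coeff r 0, coeff r 1, coeff r 2, coeff r 3:]"
  by (auto simp: poly_eq_iff coeff_pCons coeff_eq_0 eval_nat_numeral split: nat.splits)

lemma Fr_monom: "Fr (monom 1 k) = V ^ k"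
  unfolding V_def monom_altdef by (simp add: rhomD[OF rhom_Fr])

context L begin

definition eB :: "'a poly poly" where "eB = cB (1 / a) * (cB c * tB + cB d) * yB ^ 2"
definition rho :: "'a poly poly poly \<Rightarrow> 'a poly poly" where "rho = E3 cB tB eB yB"
definition hB :: "'a poly poly" where
  "hB = pCons (smult (a ^ 3) (monom 1 4)) (pCons 0 (pCons 0 (pCons 0 [: - ([:d, c:] ^ 3) :])))"

lemma rhom_rho: "rhom rho" unfolding rho_def by (intro rhom_E3 rhom_cB)
lemma rho_gen: "rho (cnst k) = cB k" "rho var_t = tB" "rho var_x = eB" "rho var_y = yB"
  unfolding rho_def using E3_gen[OF rhom_cB] by auto

lemma inv_a: "cnst (1 / a) * cnst a = 1"
  using a by (simp add: cnst_simps(4)[symmetric] cnst_simps(2))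

lemma iota_eB: "iota eB = cnst (1 / a) * (cnst c * var_t + cnst d) * var_y ^ 2"
  unfolding eB_def by (simp add: rhomD[OF rhom_iota] iota_gen)

lemma x_minus: "var_x - iota eB = - cnst (1 / a) * Gp"
proof -
  have "- cnst (1 / a) * Gp = (cnst (1 / a) * cnst a) * var_x - cnst (1 / a) * (cnst c * var_t + cnst d) * var_y ^ 2"
    unfolding Gp_def by (simp add: algebra_simps)
  thus ?thesis unfolding iota_eB inv_a by simp
qed

lemma diff_iota_rho:
  assumes Q: "is_ideal Q" and G: "Gp \<in> Q"
  shows "p - iota (rho p) \<in> Q"
proof -
  have "(\<lambda>p. p) p - (iota \<circ> rho) p \<in> Q"
  proof (rule hom_diff[OF rhom_id rhom_comp[OF rhom_rho rhom_iota] Q])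
    show "cnst k - (iota \<circ> rho) (cnst k) \<in> Q" for k
      using ideal_zero[OF Q] by (simp add: rho_gen iota_gen)
    show "var_t - (iota \<circ> rho) var_t \<in> Q"
      using ideal_zero[OF Q] by (simp add: rho_gen iota_gen)
    show "var_y - (iota \<circ> rho) var_y \<in> Q"
      using ideal_zero[OF Q] by (simp add: rho_gen iota_gen)
    show "var_x - (iota \<circ> rho) var_x \<in> Q"
      using ideal_mult[OF Q G, of "- cnst (1 / a)"] by (simp add: rho_gen x_minus)
  qed
  thus ?thesis by simp
qed

lemma ev_iota_rho: "ev (iota (rho p)) = ev p"
proof -
  have "(ev \<circ> (iota \<circ> rho)) p = ev p"
  proof (rule hom_eq[OF rhom_comp[OF rhom_comp[OF rhom_rho rhom_iota] rhom_ev] rhom_ev])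
    have "ev (var_x - iota eB) = 0" unfolding x_minus by (simp add: ev_simps ev_Gp)
    thus "(ev \<circ> (iota \<circ> rho)) var_x = ev var_x" by (simp add: rho_gen ev_simps)
  qed (simp_all add: rho_gen iota_gen)
  thus ?thesis by simp
qed

lemma ev_gg: "ev (gg u) = Fr (pcompose u Tp)"
proof (induct u)
  case 0 thus ?case by (simp add: rhomD[OF rhom_gg] rhomD[OF rhom_Fr] ev_simps)
next
  case (pCons k u)
  have "gg (pCons k u) = cnst k + var_t * gg u"
    unfolding gg_def by (simp add: E1_pCons rhomD[OF rhom_cnst])
  hence "ev (gg (pCons k u)) = cf k + Tf * Fr (pcompose u Tp)"
    using pCons by (simp add: ev_simps)
  thus ?case by (simp add: pcompose_pCons rhomD[OF rhom_Fr] cf_def Tf_def)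
qed

lemma ev_gg_nz: "u \<noteq> 0 \<Longrightarrow> ev (gg u) \<noteq> 0"
  unfolding ev_gg Fr_eq_0 using pcompose_eq_0[of u Tp] degree_Tp by auto

lemma ev_iota: "ev (iota r) = E1 (ev \<circ> gg) Yf r"
  unfolding iota_def by (simp add: E1_comp[where g=ev, OF rhom_ev] rhomD[OF rhom_gg] ev_gen)

lemma M4_Tp: "M4 Tp" unfolding M4_def coeff_Tp by auto

lemma M4_pc: "M4 (pcompose u Tp)"
proof (induct u)
  case 0 thus ?case by (simp add: M4_def)
next
  case (pCons k u) thus ?case unfolding pcompose_pCons by (intro M4_add M4_mult M4_const M4_Tp)
qed

lemma indep:
  assumes deg: "degree r < 4" and z: "ev (iota r) = 0"
  shows "r = 0"
proof -
  define P where "P i = pcompose (coeff r i) Tp" for i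
  have r: "r = [:coeff r 0, coeff r 1, coeff r 2, coeff r 3:]" by (rule poly4[OF deg])
  have fz: "(ev \<circ> gg) 0 = 0" by (simp add: rhomD[OF rhom_gg] ev_simps)
  have "ev (iota r) = Fr (P 0) + Yf * (Fr (P 1) + Yf * (Fr (P 2) + Yf * Fr (P 3)))"
    unfolding ev_iota by (subst r) (simp add: E1_pCons[where f="ev \<circ> gg", OF fz] ev_gg P_def)
  hence 0: "Fr (P 0) + Yf * (Fr (P 1) + Yf * (Fr (P 2) + Yf * Fr (P 3))) = 0" using z by simp
  have "Fr (monom 1 9 * P 0 + monom 1 6 * (P 1 * Tp) + monom 1 3 * (P 2 * Tp ^ 2) + monom 1 0 * (P 3 * Tp ^ 3))
      = V ^ 9 * (Fr (P 0) + Yf * (Fr (P 1) + Yf * (Fr (P 2) + Yf * Fr (P 3))))"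
    unfolding Yf_def Tf_def using V_nz
    by (simp add: rhomD[OF rhom_Fr] Fr_monom field_simps eval_nat_numeral) auto
  hence "monom 1 9 * P 0 + monom 1 6 * (P 1 * Tp) + monom 1 3 * (P 2 * Tp ^ 2) + monom 1 0 * (P 3 * Tp ^ 3) = 0"
    using 0 Fr_eq_0 mult_zero_right by metis
  moreover have mP: "M4 (P i)" for i unfolding P_def by (rule M4_pc)
  ultimately have "P 0 = 0 \<and> P 1 * Tp = 0 \<and> P 2 * Tp ^ 2 = 0 \<and> P 3 * Tp ^ 3 = 0"
    using sep4[OF mP M4_mult[OF mP M4_Tp] M4_mult[OF mP M4_power[OF M4_Tp]] M4_mult[OF mP M4_power[OF M4_Tp]]]
    by blast
  hence "P i = 0" if "i \<in> {0, 1, 2, 3}" for i using that Tp_nz by auto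
  hence "coeff r i = 0" if "i \<in> {0, 1, 2, 3}" for i
    using that pcompose_eq_0[of "coeff r i" Tp] degree_Tp unfolding P_def by auto
  thus ?thesis by (subst r) simp
qed


lemma iota_hB: "iota hB = hp"
proof -
  have A: "smult (a ^ 3) (monom 1 4) = [:a:] ^ 3 * [:0, 1:] ^ 4" by (simp add: monom_altdef eval_nat_numeral)
  have B: "[:d, c:] = [:d:] + [:c:] * [:0, 1:]" by simp
  have g0: "gg 0 = 0" by (rule rhomD(1)[OF rhom_gg])
  have i: "iota (pCons u r) = gg u + var_y * iota r" for u r
    unfolding iota_def by (rule E1_pCons[where f=gg, OF g0])
  have gdc: "gg [:d, c:] = cnst d + cnst c * var_t"
    unfolding B rhomD(3,4)[OF rhom_gg] gg_gen by simp
  have i0: "iota 0 = 0" by (rule rhomD(1)[OF rhom_iota])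
  have "iota hB = cnst a ^ 3 * var_t ^ 4 + var_y * (0 + var_y * (0 + var_y * (0 + var_y * (- ((cnst d + cnst c * var_t) ^ 3) + var_y * 0))))"
    unfolding hB_def i A i0 g0 rhomD(3,4,5,7)[OF rhom_gg] gg_gen gdc ..
  thus ?thesis unfolding hp_def by (simp add: algebra_simps eval_nat_numeral)
qed

lemma degree_hB: "degree hB = 4"
proof -
  have "[:d, c:] \<noteq> 0" using c by simp
  hence "[:d, c:] ^ 3 \<noteq> 0" by simp
  thus ?thesis unfolding hB_def by simp
qed

lemma P2_min:
  assumes Q: "prime_ideal Q" and IQ: "Ip \<subseteq> Q" and QP: "Q \<subseteq> P2"
  shows "Q = P2"
proof -
  have QI: "is_ideal Q" using Q prime_ideal_def by blast
  have y: "var_y \<notin> Q" using QP Yf_nz by (auto simp: P2_def ev_gen)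
  have "var_y * var_y \<notin> Q" using y prime_mult[OF Q] by blast
  hence hQ: "hp \<in> Q" using prime_mult[OF Q] y2h_Ip IQ by blast
  have GQ: "Gp \<in> Q" using SG_Ip IQ by auto
  have evh: "ev hp = 0" using hQ QP by (auto simp: P2_def)
  have "p \<in> Q" if p: "ev p = 0" for p
  proof -
    define f where "f = rho p"
    define r where "r = pseudo_mod f hB"
    have hB0: "hB \<noteq> 0" using degree_hB by auto
    obtain \<alpha> q where al: "\<alpha> \<noteq> 0" and eq: "smult \<alpha> f = hB * q + r"
      using pseudo_mod(1)[OF hB0, of f] r_def by blast
    have rdeg: "r = 0 \<or> degree r < 4" using pseudo_mod(2)[OF hB0, of f] r_def degree_hB by simp
    have sm: "smult \<alpha> f = [:\<alpha>:] * f" by simp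
    have evf: "ev (iota f) = 0" unfolding f_def ev_iota_rho by (rule p)
    have ism: "iota (smult \<alpha> f) = iota [:\<alpha>:] * iota f" unfolding sm by (rule rhomD(4)[OF rhom_iota])
    have e2: "iota (smult \<alpha> f) = hp * iota q + iota r"
      using arg_cong[OF eq, of iota] by (simp add: rhomD[OF rhom_iota] iota_hB)
    have "iota r = iota [:\<alpha>:] * iota f - hp * iota q" using ism e2 by (simp add: algebra_simps)
    hence "ev (iota r) = 0" by (simp add: ev_simps evf evh)
    hence r0: "r = 0" using rdeg indep by blast
    have "iota [:\<alpha>:] * iota f = hp * iota q"
      using ism e2 r0 by (simp add: rhomD[OF rhom_iota])
    hence "iota [:\<alpha>:] * iota f \<in> Q" using ideal_mult2[OF QI hQ] by simp
    moreover have "iota [:\<alpha>:] \<notin> Q" using QP ev_gg_nz[OF al] by (auto simp: P2_def iota_const)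
    ultimately have "iota f \<in> Q" using prime_mult[OF Q] by blast
    moreover have "p - iota f \<in> Q" unfolding f_def by (rule diff_iota_rho[OF QI GQ])
    ultimately have "(p - iota f) + iota f \<in> Q" by (intro ideal_add[OF QI])
    thus ?thesis by simp
  qed
  thus ?thesis using QP by (auto simp: P2_def)
qed

end

theorem theorem4p1:
  fixes a c d :: "'a::field"
  assumes char2: "(2::'a) \<noteq> 0" and char3: "(3::'a) \<noteq> 0"
    and a: "a \<noteq> 0" and c: "c \<noteq> 0" and d: "d \<noteq> 0"
  defines "S \<equiv> (var_t ^ 4 + cnst c * var_t + cnst d) * var_y ^ 2 - (var_x ^ 3 + cnst a * var_x)"
    and "G \<equiv> (cnst c * var_t + cnst d) * var_y ^ 2 - cnst a * var_x"
  shows "\<exists>P1 P2. minimal_prime_over (ideal_gen {S, G}) P1 \<and>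
                 minimal_prime_over (ideal_gen {S, G}) P2 \<and> P1 \<noteq> P2 \<and>
                 P1 = radical (ideal_gen {S, G, var_y}) \<and>
                 rational_curve_ideal P2"
proof -
  interpret L a c d using a c d by unfold_locales
  have SG: "S = L.Sp a c d" "G = L.Gp a c d" unfolding S_def G_def Sp_def Gp_def by simp_all
  have I: "ideal_gen {S, G} = L.Ip a c d" unfolding SG Ip_def ..
  show ?thesis
  proof (intro exI conjI)
    show "minimal_prime_over (ideal_gen {S, G}) P1"
      unfolding minimal_prime_over_def I using P1_prime Ip_P1 P1_min by blast
    show "minimal_prime_over (ideal_gen {S, G}) P2"
      unfolding minimal_prime_over_def I using P2_prime Ip_P2 P2_min by blast
    show "P1 \<noteq> P2" by (rule P1_ne_P2)
    show "P1 = radical (ideal_gen {S, G, var_y})" unfolding SG P1_rad ..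
    show "rational_curve_ideal P2" by (rule rational)
  qed
qed


end
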